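(* Let $d\ge 2$ and $n\ge 2$ be integers, let $k\ge0$ be such that $n_k\le n<n_{k+1}$, let $\lambda(n)=(l_{k+1},l_k,\ldots,l_0)$, and set $\lambda_i(n)=l_0+l_1d+\cdots+l_{i-1}d^{i-1}$ (so $\lambda_0(n)=0$). Then $$W(D_{n,d};q)=\sum_{i=0}^k d^i(n-n_i+1)q^{2i+1}+\sum_{i=0}^{k'}\left(d^{2i}\left\lfloor\frac{n-m_i}{d^{i+1}}\right\rfloor\binom{d+1}{2}+d^{2i}\binom{l_i+1}{2}+d^i(l_i+1)(\lambda_i(n)+1)\right)q^{2i+2},$$ where $k'=k-1$ if $n_k\le n<m_k$ and $k'=k$ if $m_k\le n<n_{k+1}$.
   Context: For a connected graph $G$, $W(G;q)=\sum_{\{u,v\}}q^{d(u,v)}$ over unordered pairs of distinct vertices, $d$ the graph distance. The $d$-ary dendrimer $D_{n,d}$ is the tree on vertex set $\{1,\ldots,n\}$ defined inductively: $D_{1,d}$ is the single vertex $1$, and $D_{n,d}$ is obtained from $D_{n-1,d}$ by attaching a new leaf $n$ to the smallest-numbered vertex of $D_{n-1,d}$ having degree $\le d$. Define $n_k=2+(d+1)\frac{d^k-1}{d-1}$ and $m_k=3+2d\frac{d^k-1}{d-1}$ for $k\ge0$. For a vertex $m$ with $n_k\le m<n_{k+1}$, its label is $\lambda(m)=(l_{k+1},l_k,\ldots,l_0)$ where $0\le l_i<d$ and $\sum_{i=0}^{k+1}l_id^i=m-n_k+(d-1)d^k$. *)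

theory Defs
  imports Main
begin

(* Undirected graph given by a set of (oriented) edges; adjacency is symmetric. *)
definition adj :: "(nat \<times> nat) set \<Rightarrow> (nat \<times> nat) set" where
  "adj E = E \<union> E\<inverse>"

definition deg :: "(nat \<times> nat) set \<Rightarrow> nat \<Rightarrow> nat" where
  "deg E v = card {u. (u, v) \<in> adj E}"

fun dend_edges :: "nat \<Rightarrow> nat \<Rightarrow> (nat \<times> nat) set" where
  "dend_edges d 0 = {}"
| "dend_edges d (Suc n) =
     (if n = 0 then {}
      else insert (LEAST v. 1 \<le> v \<and> v \<le> n \<and> deg (dend_edges d n) v \<le> d, Suc n)
                  (dend_edges d n))"

definition gdist :: "(nat \<times> nat) set \<Rightarrow> nat \<Rightarrow> nat \<Rightarrow> nat" where
  "gdist E u v = (LEAST k. (u, v) \<in> (adj E) ^^ k)"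

definition wiener :: "nat \<Rightarrow> (nat \<times> nat) set \<Rightarrow> 'a::comm_ring_1 \<Rightarrow> 'a" where
  "wiener n E q = (\<Sum>u\<in>{1..n}. \<Sum>v\<in>{u<..n}. q ^ gdist E u v)"

definition nk :: "nat \<Rightarrow> nat \<Rightarrow> nat" where
  "nk d k = 2 + (d + 1) * ((d ^ k - 1) div (d - 1))"

definition mk :: "nat \<Rightarrow> nat \<Rightarrow> nat" where
  "mk d k = 3 + 2 * d * ((d ^ k - 1) div (d - 1))"

(* label digits: lambda(m) = (l_{k+1},...,l_0), sum l_i d^i = m - n_k + (d-1) d^k *)
definition label_digit :: "nat \<Rightarrow> nat \<Rightarrow> nat \<Rightarrow> nat \<Rightarrow> nat" where
  "label_digit d k m i = ((m - nk d k + (d - 1) * d ^ k) div d ^ i) mod d"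

definition label_low :: "nat \<Rightarrow> nat \<Rightarrow> nat \<Rightarrow> nat \<Rightarrow> nat" where
  "label_low d k m i = (\<Sum>j<i. label_digit d k m j * d ^ j)"

end

theory Submission
  imports Defs
begin


definition par :: "nat \<Rightarrow> nat \<Rightarrow> nat" where
  "par d m = (m - 3) div d + 1"

lemma par_lt: "2 \<le> m \<Longrightarrow> par d m < m"
proof -
  assume "2 \<le> m"
  have "(m - 3) div d \<le> m - 3" by (rule div_le_dividend)
  then show ?thesis using \<open>2 \<le> m\<close> unfolding par_def by linarith
qed

lemma par_ge1: "1 \<le> par d m" by (simp add: par_def)

function td :: "nat \<Rightarrow> nat \<Rightarrow> nat \<Rightarrow> nat" where
  "td d u v = (if u = v \<or> u = 0 \<or> v = 0 then 0
     else if u < v then Suc (td d u (par d v)) else Suc (td d (par d u) v))"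
  by auto
termination
proof (relation "measure (\<lambda>(d,u,v). u + v)")
  show "wf (measure (\<lambda>(d, u, v). u + v))" by simp
next
  fix d u v :: nat
  assume "\<not> (u = v \<or> u = 0 \<or> v = 0)" "u < v"
  then have "par d v < v" by (intro par_lt) auto
  then show "((d, u, par d v), d, u, v) \<in> measure (\<lambda>(d, u, v). u + v)" by simp
next
  fix d u v :: nat
  assume "\<not> (u = v \<or> u = 0 \<or> v = 0)" "\<not> u < v"
  then have "par d u < u" by (intro par_lt) auto
  then show "((d, par d u, v), d, u, v) \<in> measure (\<lambda>(d, u, v). u + v)" by simp
qed

declare td.simps[simp del]

lemma td_refl[simp]: "td d u u = 0" by (simp add: td.simps)
lemma td_lt: "1 \<le> u \<Longrightarrow> u < v \<Longrightarrow> td d u v = Suc (td d u (par d v))"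
  by (subst td.simps) auto
lemma td_gt: "1 \<le> v \<Longrightarrow> v < u \<Longrightarrow> td d u v = Suc (td d (par d u) v)"
  by (subst td.simps) auto

lemma td_sym: "td d u v = td d v u"
proof (induction d u v rule: td.induct)
  case (1 d u v)
  show ?case
  proof (cases "u = v \<or> u = 0 \<or> v = 0")
    case True then show ?thesis by (auto simp: td.simps)
  next
    case False
    show ?thesis
    proof (cases "u < v")
      case True
      then show ?thesis using False 1(1) by (simp add: td_lt td_gt)
    next
      case F2: False
      then have "v < u" using False by auto
      then show ?thesis using False 1(2) F2 by (simp add: td_lt td_gt)
    qed
  qed
qed

function anc :: "nat \<Rightarrow> nat \<Rightarrow> nat \<Rightarrow> bool" where
  "anc d u x = (if u = x then True else if 2 \<le> x then anc d u (par d x) else False)"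
  by auto
termination by (relation "measure (\<lambda>(d,u,x). x)") (auto intro: par_lt)

declare anc.simps[simp del]

lemma anc_unfold: "anc d u x = (u = x \<or> (2 \<le> x \<and> anc d u (par d x)))"
  by (subst anc.simps) auto

lemma anc_le: "anc d u x \<Longrightarrow> u \<le> x"
proof (induction x rule: less_induct)
  case (less x)
  show ?case
  proof (cases "u = x")
    case True then show ?thesis by simp
  next
    case False
    with less.prems have "2 \<le> x" "anc d u (par d x)" by (auto simp: anc_unfold[of d u x])
    with less.IH[of "par d x"] par_lt[of x d] show ?thesis by auto
  qed
qed

lemma claimA: "2 \<le> m \<Longrightarrow> 1 \<le> w \<Longrightarrow> \<not> anc d m w \<Longrightarrow> td d w m = Suc (td d w (par d m))"
proof (induction w rule: less_induct)
  case (less w)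
  consider "w < m" | "w = m" | "m < w" by linarith
  then show ?case
  proof cases
    case 1 then show ?thesis using less.prems by (simp add: td_lt)
  next
    case 2 then show ?thesis using less.prems by (simp add: anc_unfold[of d m m])
  next
    case 3
    have w2: "2 \<le> w" using 3 less.prems by auto
    have na: "\<not> anc d m (par d w)" using less.prems(3) w2 by (auto simp: anc_unfold[of d m w])
    have IH: "td d (par d w) m = Suc (td d (par d w) (par d m))"
      using less.IH[OF par_lt[OF w2] less.prems(1) par_ge1 na] .
    have pm: "par d m < m" using par_lt less.prems by auto
    have "td d w m = Suc (td d (par d w) m)" using 3 less.prems by (simp add: td_gt)
    moreover have "td d w (par d m) = Suc (td d (par d w) (par d m))"
      using 3 pm par_ge1 by (simp add: td_gt)
    ultimately show ?thesis using IH by simp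
  qed
qed

lemma claimB: "2 \<le> m \<Longrightarrow> anc d m w \<Longrightarrow> td d w (par d m) = Suc (td d w m)"
proof (induction w rule: less_induct)
  case (less w)
  have pm: "par d m < m" using par_lt less.prems by auto
  show ?case
  proof (cases "w = m")
    case True then show ?thesis using pm par_ge1 by (simp add: td_gt)
  next
    case False
    with less.prems have w2: "2 \<le> w" and a: "anc d m (par d w)" by (auto simp: anc_unfold[of d m w])
    have le: "m \<le> par d w" using anc_le[OF a] .
    have pw: "par d w < w" using par_lt[OF w2] .
    have IH: "td d (par d w) (par d m) = Suc (td d (par d w) m)"
      using less.IH[OF pw less.prems(1) a] .
    have "td d w (par d m) = Suc (td d (par d w) (par d m))"
      using le pw pm par_ge1 by (simp add: td_gt)
    moreover have "td d w m = Suc (td d (par d w) m)"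
      using le pw less.prems by (simp add: td_gt)
    ultimately show ?thesis using IH by simp
  qed
qed

lemma lip1: "2 \<le> m \<Longrightarrow> 1 \<le> w \<Longrightarrow> td d w m \<le> Suc (td d w (par d m))"
  using claimA claimB by (cases "anc d m w") fastforce+

lemma lip2: "2 \<le> m \<Longrightarrow> 1 \<le> w \<Longrightarrow> td d w (par d m) \<le> Suc (td d w m)"
  using claimA claimB by (cases "anc d m w") fastforce+



definition Ed :: "nat \<Rightarrow> nat \<Rightarrow> (nat \<times> nat) set" where
  "Ed d n = {(par d m, m) | m. 2 \<le> m \<and> m \<le> n}"

lemma par_eq_iff:
  assumes "1 \<le> d" "2 \<le> v"
  shows "par d m = v \<longleftrightarrow> d*(v-1)+3 \<le> m \<and> m < d*(v-1)+3+d"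
proof
  assume h: "par d m = v"
  then have "(m - 3) div d = v - 1" unfolding par_def using assms by auto
  moreover have "m \<ge> 3"
  proof (rule ccontr)
    assume "\<not> 3 \<le> m" then have "m - 3 = 0" by auto
    then show False using h assms unfolding par_def by auto
  qed
  moreover have "d * ((m-3) div d) + (m-3) mod d = m - 3" by (rule mult_div_mod_eq)
  moreover have "(m-3) mod d < d" using assms by simp
  ultimately have "d * (v-1) + (m-3) mod d = m - 3" "(m-3) mod d < d" "3 \<le> m" by auto
  then show "d*(v-1)+3 \<le> m \<and> m < d*(v-1)+3+d" by linarith
next
  assume h: "d*(v-1)+3 \<le> m \<and> m < d*(v-1)+3+d"
  have "(m - 3) div d = v - 1"
    apply (rule div_nat_eqI) using h assms mult_Suc_right[of d "v-1"] by linarith+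
  then show "par d m = v" unfolding par_def using assms by auto
qed

lemma par_eq_1_iff: "1 \<le> d \<Longrightarrow> par d m = 1 \<longleftrightarrow> m \<le> d + 2"
  unfolding par_def by (auto simp: div_eq_0_iff)

lemma nbrs: "{u. (u, v) \<in> adj (Ed d n)} =
   {u. 2 \<le> v \<and> v \<le> n \<and> u = par d v} \<union> {u. 2 \<le> u \<and> u \<le> n \<and> par d u = v}"
  unfolding adj_def Ed_def by auto

lemma least_eq:
  assumes d: "2 \<le> d" and n: "1 \<le> n"
  shows "(LEAST v. 1 \<le> v \<and> v \<le> n \<and> deg (Ed d n) v \<le> d) = par d (Suc n)"
proof -
  define P where "P = par d (Suc n)"
  have fin: "finite {u. (u, v) \<in> adj (Ed d n)}" for v
  proof (rule finite_subset[of _ "{0..n}"])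
    show "{u. (u, v) \<in> adj (Ed d n)} \<subseteq> {0..n}"
      unfolding nbrs using par_lt[of v d] by auto
  qed simp
  have P1: "1 \<le> P" unfolding P_def by (rule par_ge1)
  have Pform: "P = (n - 2) div d + 1" unfolding P_def par_def by (simp add: numeral_3_eq_3 numeral_2_eq_2)
  have Pn: "P \<le> n"
  proof (cases "n = 1")
    case True then show ?thesis unfolding P_def par_def by simp
  next
    case False
    then have "P < Suc n" unfolding P_def using par_lt[of "Suc n" d] n by auto
    then show ?thesis by simp
  qed
  have degP: "deg (Ed d n) P \<le> d"
  proof (cases "P = 1")
    case True
    then have sn: "Suc n \<le> d + 2" using par_eq_1_iff[of d "Suc n"] d unfolding P_def by auto
    have "{u. (u, P) \<in> adj (Ed d n)} \<subseteq> {2..n}"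
      unfolding nbrs using True by auto
    then have "card {u. (u, P) \<in> adj (Ed d n)} \<le> card {2..n}" by (intro card_mono) auto
    then show ?thesis unfolding deg_def using sn by auto
  next
    case False
    then have P2: "2 \<le> P" using P1 by linarith
    have d1: "1 \<le> d" using d by linarith
    have eqP: "par d (Suc n) = P" unfolding P_def ..
    have ch: "d*(P-1)+3 \<le> Suc n \<and> Suc n < d*(P-1)+3+d"
      using par_eq_iff[OF d1 P2, of "Suc n"] eqP by blast
    have "{u. (u, P) \<in> adj (Ed d n)} \<subseteq> insert (par d P) ({d*(P-1)+3..<d*(P-1)+3+d} - {Suc n})"
    proof
      fix u assume "u \<in> {u. (u, P) \<in> adj (Ed d n)}"
      then have "(2 \<le> P \<and> P \<le> n \<and> u = par d P) \<or> (2 \<le> u \<and> u \<le> n \<and> par d u = P)"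
        unfolding nbrs by blast
      then show "u \<in> insert (par d P) ({d*(P-1)+3..<d*(P-1)+3+d} - {Suc n})"
      proof
        assume "2 \<le> u \<and> u \<le> n \<and> par d u = P"
        then have "d*(P-1)+3 \<le> u \<and> u < d*(P-1)+3+d" "u \<le> n"
          using par_eq_iff[OF d1 P2, of u] by blast+
        then show ?thesis by simp
      qed simp
    qed
    then have "card {u. (u, P) \<in> adj (Ed d n)} \<le> card (insert (par d P) ({d*(P-1)+3..<d*(P-1)+3+d} - {Suc n}))"
      by (intro card_mono) auto
    also have "\<dots> \<le> Suc (card ({d*(P-1)+3..<d*(P-1)+3+d} - {Suc n}))"
      by (rule card_insert_le_m1) auto
    also have "card ({d*(P-1)+3..<d*(P-1)+3+d} - {Suc n}) = d - 1"
      using ch by (subst card_Diff_singleton) auto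
    finally show ?thesis unfolding deg_def using d by auto
  qed
  have big: "d < deg (Ed d n) v" if "1 \<le> v" "v < P" for v
  proof (cases "v = 1")
    case True
    have "1 < (n - 2) div d + 1" using that True Pform by linarith
    then have "1 \<le> (n - 2) div d" by linarith
    moreover have "(1 \<le> (n-2) div d) = (1 * d \<le> n - 2)"
      by (rule less_eq_div_iff_mult_less_eq) (use d in linarith)
    ultimately have dn: "d \<le> n - 2" by simp
    have "{2..d+2} \<subseteq> {u. (u, v) \<in> adj (Ed d n)}"
    proof
      fix u assume u: "u \<in> {2..d+2}"
      then have "par d u = 1" using par_eq_1_iff[of d u] d by simp
      moreover have "u \<le> d + 2" "2 \<le> u" using u by auto
      moreover then have "u \<le> n" using dn d by linarith
      ultimately have "par d u = 1" "2 \<le> u \<and> u \<le> n" by auto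
      then show "u \<in> {u. (u, v) \<in> adj (Ed d n)}" unfolding nbrs using True by blast
    qed
    then have "card {2..d+2} \<le> card {u. (u, v) \<in> adj (Ed d n)}" by (intro card_mono fin)
    then show ?thesis unfolding deg_def by auto
  next
    case False
    then have v2: "2 \<le> v" using that by auto
    have "v < (n - 2) div d + 1" using that Pform by linarith
    then have "v \<le> (n - 2) div d" by linarith
    then have vn: "v * d \<le> n - 2" using less_eq_div_iff_mult_less_eq[of d v "n-2"] d by auto
    have pv: "par d v < v" using par_lt[OF v2] .
    have "insert (par d v) {d*(v-1)+3..<d*(v-1)+3+d} \<subseteq> {u. (u, v) \<in> adj (Ed d n)}"
    proof -
      have "d*(v-1)+3+d = d * v + 3" using v2 by (cases v) auto
      moreover have "2*1 \<le> d * v" using d v2 by (intro mult_le_mono) auto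
      ultimately have A: "d*(v-1)+3+d \<le> n + 1" using vn by (simp add: mult.commute)
      have vn': "v \<le> n" using that Pn by auto
      have d1: "1 \<le> d" using d by simp
      show ?thesis
      proof
        fix u assume u: "u \<in> insert (par d v) {d*(v-1)+3..<d*(v-1)+3+d}"
        show "u \<in> {u. (u, v) \<in> adj (Ed d n)}"
        proof (cases "u = par d v")
          case True then show ?thesis unfolding nbrs using v2 vn' by blast
        next
          case False
          then have "u \<in> {d*(v-1)+3..<d*(v-1)+3+d}" using u by blast
          then have "par d u = v" "2 \<le> u" "u \<le> n" using par_eq_iff[OF d1 v2, of u] A by auto
          then show ?thesis unfolding nbrs by blast
        qed
      qed
    qed
    then have "card (insert (par d v) {d*(v-1)+3..<d*(v-1)+3+d}) \<le> card {u. (u, v) \<in> adj (Ed d n)}"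
      by (intro card_mono fin)
    moreover have "card (insert (par d v) {d*(v-1)+3..<d*(v-1)+3+d}) = Suc d"
    proof -
      have "1 * (v-1) \<le> d * (v-1)" using d by (intro mult_le_mono1) auto
      then have "v - 1 \<le> d * (v-1)" by simp
      then have "par d v < d*(v-1)+3" using pv v2 by linarith
      then have "par d v \<notin> {d*(v-1)+3..<d*(v-1)+3+d}" by simp
      then show ?thesis by simp
    qed
    ultimately show ?thesis unfolding deg_def by auto
  qed
  show ?thesis unfolding P_def[symmetric]
  proof (rule Least_equality)
    show "1 \<le> P \<and> P \<le> n \<and> deg (Ed d n) P \<le> d" using P1 Pn degP by auto
  next
    fix y assume "1 \<le> y \<and> y \<le> n \<and> deg (Ed d n) y \<le> d"
    then show "P \<le> y" using big by (meson not_le)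
  qed
qed

lemma dend_Ed: "2 \<le> d \<Longrightarrow> dend_edges d n = Ed d n"
proof (induction n)
  case 0 then show ?case by (simp add: Ed_def)
next
  case (Suc n)
  show ?case
  proof (cases "n = 0")
    case True then show ?thesis by (simp add: Ed_def)
  next
    case False
    then have "dend_edges d (Suc n) = insert (par d (Suc n), Suc n) (Ed d n)"
      using Suc least_eq[of d n] by simp
    also have "\<dots> = Ed d (Suc n)" unfolding Ed_def using False by (auto simp: le_Suc_eq)
    finally show ?thesis .
  qed
qed



lemma edge_in: "2 \<le> m \<Longrightarrow> m \<le> n \<Longrightarrow> (par d m, m) \<in> adj (Ed d n)"
  unfolding adj_def Ed_def by blast

lemma edge_in': "2 \<le> m \<Longrightarrow> m \<le> n \<Longrightarrow> (m, par d m) \<in> adj (Ed d n)"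
  unfolding adj_def Ed_def by blast

lemma path: "1 \<le> u \<Longrightarrow> u \<le> n \<Longrightarrow> 1 \<le> v \<Longrightarrow> v \<le> n \<Longrightarrow> (u, v) \<in> (adj (Ed d n)) ^^ (td d u v)"
proof (induction d u v rule: td.induct)
  case (1 d u v)
  show ?case
  proof (cases "u = v")
    case True then show ?thesis by simp
  next
    case False
    show ?thesis
    proof (cases "u < v")
      case True
      then have v2: "2 \<le> v" using 1 by linarith
      have pv: "par d v < v" using par_lt[OF v2] .
      have IH: "(u, par d v) \<in> (adj (Ed d n)) ^^ (td d u (par d v))"
        using 1(1) 1(3-6) False True pv par_ge1[of d v] by auto
      have "td d u v = Suc (td d u (par d v))" using True 1(3) by (simp add: td_lt)
      then show ?thesis using relpow_Suc_I[OF IH edge_in[OF v2 1(6)]] by simp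
    next
      case F2: False
      then have lt: "v < u" using False by linarith
      then have u2: "2 \<le> u" using 1 by linarith
      have pu: "par d u < u" using par_lt[OF u2] .
      have IH: "(par d u, v) \<in> (adj (Ed d n)) ^^ (td d (par d u) v)"
        using 1(2) 1(3-6) False F2 pu par_ge1[of d u] by auto
      have "td d u v = Suc (td d (par d u) v)" using lt 1(5) by (simp add: td_gt)
      then show ?thesis using relpow_Suc_I2[OF edge_in'[OF u2 1(4)] IH] by simp
    qed
  qed
qed

lemma lower: "(u, v) \<in> (adj (Ed d n)) ^^ k \<Longrightarrow> 1 \<le> u \<Longrightarrow> td d u v \<le> k"
proof (induction k arbitrary: v)
  case 0 then show ?case by simp
next
  case (Suc k)
  from Suc.prems(1) obtain y where y1: "(u, y) \<in> (adj (Ed d n)) ^^ k" and y2: "(y, v) \<in> adj (Ed d n)"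
    by (rule relpow_Suc_E)
  have IH: "td d u y \<le> k" using Suc.IH[OF y1 Suc.prems(2)] .
  from y2 obtain m where m: "2 \<le> m" "(y = par d m \<and> v = m) \<or> (v = par d m \<and> y = m)"
    unfolding adj_def Ed_def by blast
  from m(2) show ?case
  proof
    assume "y = par d m \<and> v = m"
    then show ?thesis using lip1[OF m(1) Suc.prems(2), of d] IH by auto
  next
    assume "v = par d m \<and> y = m"
    then show ?thesis using lip2[OF m(1) Suc.prems(2), of d] IH by auto
  qed
qed

lemma gdist_td: "1 \<le> u \<Longrightarrow> u \<le> n \<Longrightarrow> 1 \<le> v \<Longrightarrow> v \<le> n \<Longrightarrow> gdist (Ed d n) u v = td d u v"
  unfolding gdist_def
  by (rule Least_equality) (auto intro: path dest: lower)



definition M :: "nat \<Rightarrow> 'a::comm_ring_1 \<Rightarrow> nat \<Rightarrow> nat \<Rightarrow> 'a" where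
  "M d q x m = (\<Sum>u\<in>{1..<m}. q ^ td d u x)"

definition fc :: "nat \<Rightarrow> nat \<Rightarrow> nat" where
  "fc d m = d * (m - 1) + 3"

lemma anc_par: "anc d c x \<Longrightarrow> 2 \<le> c \<Longrightarrow> anc d (par d c) x"
proof (induction x rule: less_induct)
  case (less x)
  show ?case
  proof (cases "c = x")
    case True
    have "anc d (par d x) (par d x)" by (simp add: anc_unfold[of d "par d x" "par d x"])
    then show ?thesis using less.prems True by (simp add: anc_unfold[of d "par d x" x])
  next
    case False
    then have x2: "2 \<le> x" and a: "anc d c (par d x)" using less.prems(1) by (auto simp: anc_unfold[of d c x])
    have "anc d (par d c) (par d x)" using less.IH[OF par_lt[OF x2] a less.prems(2)] .
    then show ?thesis using x2 by (simp add: anc_unfold[of d "par d c" x])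
  qed
qed

lemma td_up: "2 \<le> c \<Longrightarrow> 1 \<le> x \<Longrightarrow> \<not> anc d c x \<Longrightarrow> td d c x = Suc (td d (par d c) x)"
  using claimA[of c x d] td_sym[of d c x] td_sym[of d x "par d c"] by simp

lemma M_Suc: "1 \<le> m \<Longrightarrow> M d q x (Suc m) = M d q x m + q ^ td d m x"
  unfolding M_def by (simp add: sum.atLeastLessThan_Suc)

lemma M_split: "1 \<le> a \<Longrightarrow> a \<le> b \<Longrightarrow> M d q x b = M d q x a + (\<Sum>u\<in>{a..<b}. q ^ td d u x)"
  unfolding M_def by (simp add: sum.atLeastLessThan_concat)

lemma fc_Suc: "1 \<le> m \<Longrightarrow> fc d (Suc m) = fc d m + d"
  unfolding fc_def by (cases m) auto

lemma par_fc: "1 \<le> d \<Longrightarrow> 2 \<le> m \<Longrightarrow> c \<in> {fc d m..<fc d m + d} \<Longrightarrow> par d c = m"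
  using par_eq_iff[of d m c] unfolding fc_def by auto

lemma fc_gt: "1 \<le> d \<Longrightarrow> m < fc d m"
proof -
  assume "1 \<le> d"
  then have "1 * (m-1) \<le> d * (m-1)" by (intro mult_le_mono1) auto
  then have "m - 1 \<le> d * (m-1)" by simp
  then show ?thesis unfolding fc_def by linarith
qed

lemma L_step:
  fixes q :: "'a::comm_ring_1"
  assumes d: "2 \<le> d" and x: "1 \<le> x" and m: "2 \<le> m" and pm: "par d x < m"
    and L: "M d q x (fc d m) = 1 + q + of_nat d * q * M d q x m"
  shows "M d q x (fc d (Suc m)) = 1 + q + of_nat d * q * M d q x (Suc m)"
proof -
  have d1: "1 \<le> d" using d by simp
  have ch: "td d c x = Suc (td d m x)" if c: "c \<in> {fc d m..<fc d m + d}" for c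
  proof -
    have pc: "par d c = m" using par_fc[OF d1 m c] .
    have c2: "2 \<le> c" using c fc_gt[OF d1, of m] m by simp
    have "\<not> anc d c x"
    proof
      assume a: "anc d c x"
      have "c \<le> x" using anc_le[OF a] .
      then have mx: "m < x" using c fc_gt[OF d1, of m] by simp
      have "anc d m x" using anc_par[OF a c2] pc by simp
      then have "anc d m (par d x)" using mx by (simp add: anc_unfold[of d m x])
      then show False using anc_le[of d m "par d x"] pm by simp
    qed
    then show ?thesis using td_up[OF c2 x] pc by simp
  qed
  have "M d q x (fc d (Suc m)) = M d q x (fc d m) + (\<Sum>c\<in>{fc d m..<fc d m + d}. q ^ td d c x)"
    using fc_Suc[of m d] m M_split[of "fc d m" "fc d m + d" d q x] fc_gt[OF d1, of m] by simp
  also have "(\<Sum>c\<in>{fc d m..<fc d m + d}. q ^ td d c x) = (\<Sum>c\<in>{fc d m..<fc d m + d}. q * q ^ td d m x)"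
    by (rule sum.cong) (simp_all add: ch)
  also have "\<dots> = of_nat d * (q * q ^ td d m x)" by simp
  finally show ?thesis using L M_Suc[of m d q x] m by (simp add: algebra_simps)
qed



lemma sum_one_out:
  fixes f :: "nat \<Rightarrow> 'a::comm_ring_1"
  assumes "finite A" "x \<in> A" "\<And>u. u \<in> A \<Longrightarrow> u \<noteq> x \<Longrightarrow> f u = c"
  shows "sum f A = f x + of_nat (card A - 1) * c"
proof -
  have "sum f A = f x + sum f (A - {x})" using assms by (simp add: sum.remove)
  also have "sum f (A - {x}) = sum (\<lambda>_. c) (A - {x})" by (rule sum.cong) (use assms in auto)
  also have "\<dots> = of_nat (card A - 1) * c" using assms by simp
  finally show ?thesis .
qed

lemma e12: "{Suc 0..<2} = {Suc 0}" by auto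

lemma td_root_child: "1 \<le> d \<Longrightarrow> 2 \<le> u \<Longrightarrow> u \<le> d + 2 \<Longrightarrow> td d u 1 = 1"
proof -
  assume a: "1 \<le> d" "2 \<le> u" "u \<le> d + 2"
  then have "par d u = 1" using par_eq_1_iff by blast
  then show ?thesis using a by (simp add: td_gt)
qed

lemma L_base1:
  fixes q :: "'a::comm_ring_1"
  assumes d: "2 \<le> d"
  shows "M d q 1 (fc d 2) = 1 + q + of_nat d * q * M d q 1 2"
proof -
  have d1: "1 \<le> d" using d by simp
  have "M d q 1 (fc d 2) = M d q 1 2 + (\<Sum>u\<in>{2..<d+3}. q ^ td d u 1)"
    using M_split[of 2 "fc d 2" d q 1] unfolding fc_def by simp
  also have "(\<Sum>u\<in>{2..<d+3}. q ^ td d u 1) = (\<Sum>u\<in>{2..<d+3}. q)"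
    by (rule sum.cong) (use td_root_child[OF d1] in auto)
  finally have "M d q 1 (fc d 2) = M d q 1 2 + (\<Sum>u\<in>{2..<d+3}. q)" .
  moreover have "M d q 1 2 = 1" unfolding M_def by (simp add: e12)
  ultimately show ?thesis by (simp add: algebra_simps)
qed

lemma L_base2:
  fixes q :: "'a::comm_ring_1"
  assumes d: "2 \<le> d" and x: "2 \<le> x" "x \<le> d + 2"
  shows "M d q x (fc d 2) = 1 + q + of_nat d * q * M d q x 2"
proof -
  have d1: "1 \<le> d" using d by simp
  have px: "par d x = 1" using par_eq_1_iff[OF d1] x by blast
  have t1x: "td d 1 x = 1" using x px by (simp add: td_lt)
  have M2: "M d q x 2 = q" unfolding M_def using t1x by (simp add: e12)
  have "M d q x (fc d 2) = M d q x 2 + (\<Sum>u\<in>{2..<d+3}. q ^ td d u x)"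
    using M_split[of 2 "fc d 2" d q x] unfolding fc_def by simp
  also have "(\<Sum>u\<in>{2..<d+3}. q ^ td d u x) = q ^ td d x x + of_nat (card {2..<d+3} - 1) * q^2"
  proof (rule sum_one_out)
    show "x \<in> {2..<d+3}" using x by simp
  next
    fix u assume u: "u \<in> {2..<d+3}" "u \<noteq> x"
    have pu: "par d u = 1" using par_eq_1_iff[OF d1] u by auto
    have "td d u x = 2"
    proof (cases "u < x")
      case True
      then show ?thesis using u px pu td_root_child[OF d1, of u] by (simp add: td_lt)
    next
      case False
      then have "x < u" using u by simp
      then show ?thesis using x pu t1x by (simp add: td_gt)
    qed
    then show "q ^ td d u x = q^2" by simp
  qed simp
  finally show ?thesis using M2 by (simp add: algebra_simps power2_eq_square)
qed

lemma L_base3: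
  fixes q :: "'a::comm_ring_1"
  assumes d: "2 \<le> d" and g2: "2 \<le> par d x"
    and Lg: "M d q (par d x) (fc d (par d x)) = 1 + q + of_nat d * q * M d q (par d x) (par d x)"
  shows "M d q x (fc d (Suc (par d x))) = 1 + q + of_nat d * q * M d q x (Suc (par d x))"
proof -
  define g where "g = par d x"
  have d1: "1 \<le> d" using d by simp
  have g2': "2 \<le> g" using g2 g_def by simp
  have xin: "x \<in> {fc d g..<fc d g + d}"
    using par_eq_iff[OF d1 g2', of x] g_def unfolding fc_def by simp
  have gx: "g < x" using xin fc_gt[OF d1, of g] by simp
  have fgx: "fc d g \<le> x" using xin by simp
  have tgx: "td d g x = 1" using gx g2' g_def by (simp add: td_lt)
  have A: "M d q x (fc d g) = q * M d q g (fc d g)"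
    unfolding M_def sum_distrib_left
  proof (rule sum.cong)
    fix u assume "u \<in> {1..<fc d g}"
    then have "td d u x = Suc (td d u g)" using fgx g_def by (simp add: td_lt)
    then show "q ^ td d u x = q * q ^ td d u g" by simp
  qed simp
  have B: "M d q x g = q * M d q g g"
    unfolding M_def sum_distrib_left
  proof (rule sum.cong)
    fix u assume "u \<in> {1..<g}"
    then have "td d u x = Suc (td d u g)" using gx g_def by (simp add: td_lt)
    then show "q ^ td d u x = q * q ^ td d u g" by simp
  qed simp
  have C: "(\<Sum>c\<in>{fc d g..<fc d g + d}. q ^ td d c x) = q ^ td d x x + of_nat (card {fc d g..<fc d g + d} - 1) * q^2"
  proof (rule sum_one_out)
    fix c assume c: "c \<in> {fc d g..<fc d g + d}" "c \<noteq> x"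
    have pc: "par d c = g" using par_fc[OF d1 g2' c(1)] .
    have gc: "g < c" using c fc_gt[OF d1, of g] by simp
    have tcg: "td d c g = 1" using gc pc g2' by (simp add: td_gt)
    have "td d c x = 2"
    proof (cases "c < x")
      case True
      then show ?thesis using gc tcg g_def by (simp add: td_lt)
    next
      case False
      then have "x < c" using c by simp
      then show ?thesis using gx pc tgx by (simp add: td_gt)
    qed
    then show "q ^ td d c x = q^2" by simp
  qed (use xin in simp_all)
  have "M d q x (fc d (Suc g)) = M d q x (fc d g) + (\<Sum>c\<in>{fc d g..<fc d g + d}. q ^ td d c x)"
    using fc_Suc[of g d] g2' M_split[of "fc d g" "fc d g + d" d q x] fc_gt[OF d1, of g] by simp
  also have "\<dots> = q * (1 + q + of_nat d * q * M d q g g) + 1 + of_nat (d - 1) * q^2"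
    using A C Lg g_def by simp
  also have "M d q x (Suc g) = q * M d q g g + q" using M_Suc[of g d q x] g2' B tgx by simp
  moreover have od: "(of_nat d :: 'a) = 1 + of_nat (d - 1)" using d1 by (simp add: of_nat_diff)
  ultimately show ?thesis using g_def by (simp add: od algebra_simps power2_eq_square)
qed



lemma par_1: "par d 1 = 1" unfolding par_def by simp

lemma L_main:
  fixes q :: "'a::comm_ring_1"
  assumes d: "2 \<le> d"
  shows "1 \<le> x \<Longrightarrow> 2 \<le> m \<Longrightarrow> par d x < m \<Longrightarrow> M d q x (fc d m) = 1 + q + of_nat d * q * M d q x m"
proof (induction x arbitrary: m rule: less_induct)
  case (less x)
  have d1: "1 \<le> d" using d by simp
  have base0: "M d q x (fc d (Suc (par d x))) = 1 + q + of_nat d * q * M d q x (Suc (par d x))"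
  proof (cases "x = 1")
    case True
    then show ?thesis using L_base1[OF d, of q] par_1[of d] by (simp add: numeral_2_eq_2)
  next
    case False
    then have x2: "2 \<le> x" using less.prems by simp
    show ?thesis
    proof (cases "par d x = 1")
      case True
      then have "x \<le> d + 2" using par_eq_1_iff[OF d1] by blast
      then show ?thesis using L_base2[OF d x2, of q] True by (simp add: numeral_2_eq_2)
    next
      case False
      then have g2: "2 \<le> par d x" using par_ge1[of d x] by simp
      have pl: "par d x < x" using par_lt[OF x2] .
      have Lg: "M d q (par d x) (fc d (par d x)) = 1 + q + of_nat d * q * M d q (par d x) (par d x)"
        using less.IH[OF pl par_ge1 g2 par_lt[OF g2]] .
      show ?thesis using L_base3[OF d g2 Lg] .
    qed
  qed
  have "Suc (par d x) \<le> m" using less.prems by simp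
  then show ?case
  proof (induction m rule: dec_induct)
    case base
    show ?case using base0 by simp
  next
    case (step k)
    have k2: "2 \<le> k" using step(1) par_ge1[of d x] by simp
    show ?case using L_step[OF d less.prems(1) k2 _ step(3)] step(1) by simp
  qed
qed

definition inc :: "nat \<Rightarrow> 'a::comm_ring_1 \<Rightarrow> nat \<Rightarrow> 'a" where
  "inc d q v = (\<Sum>u\<in>{1..<v}. q ^ td d u v)"

lemma inc_M: "inc d q v = M d q v v" unfolding inc_def M_def ..

lemma inc_base:
  fixes q :: "'a::comm_ring_1"
  assumes d: "2 \<le> d" and v: "2 \<le> v" "v \<le> d + 2"
  shows "inc d q v = q + of_nat (v - 2) * q^2"
proof -
  have d1: "1 \<le> d" using d by simp
  have pv: "par d v = 1" using par_eq_1_iff[OF d1] v by blast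
  have "inc d q v = q ^ td d 1 v + (\<Sum>u\<in>{2..<v}. q ^ td d u v)"
    unfolding inc_def using v by (simp add: sum.atLeast_Suc_lessThan numeral_2_eq_2)
  also have "(\<Sum>u\<in>{2..<v}. q ^ td d u v) = (\<Sum>u\<in>{2..<v}. q^2)"
  proof (rule sum.cong)
    fix u assume u: "u \<in> {2..<v}"
    then have "td d u v = 2" using pv td_root_child[OF d1, of u] v by (simp add: td_lt)
    then show "q ^ td d u v = q^2" by simp
  qed simp
  finally show ?thesis using pv v by (simp add: td_lt)
qed

lemma inc_rec:
  fixes q :: "'a::comm_ring_1"
  assumes d: "2 \<le> d" and v: "d + 3 \<le> v"
  shows "inc d q v = q + of_nat ((v - 3) mod d + 1) * q^2 + of_nat d * q^2 * inc d q (par d v)"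
proof -
  define p where "p = par d v"
  define t where "t = (v - 3) mod d"
  have d1: "1 \<le> d" using d by simp
  have "par d v \<noteq> 1" using par_eq_1_iff[OF d1, of v] v by simp
  then have p2: "2 \<le> p" unfolding p_def using par_ge1[of d v] by linarith
  have pv: "p < v" unfolding p_def using par_lt[of v d] v by simp
  have vfc: "v = fc d p + t"
  proof -
    have "d * ((v - 3) div d) + (v - 3) mod d = v - 3" by (rule mult_div_mod_eq)
    then show ?thesis unfolding fc_def p_def t_def par_def using v by simp
  qed
  have tl: "t < d" unfolding t_def using d by simp
  have A: "inc d q v = q * M d q p v"
    unfolding inc_def M_def sum_distrib_left
  proof (rule sum.cong)
    fix u assume "u \<in> {1..<v}"
    then have "td d u v = Suc (td d u p)" unfolding p_def by (simp add: td_lt)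
    then show "q ^ td d u v = q * q ^ td d u p" by simp
  qed simp
  have B: "M d q p v = M d q p (fc d p) + of_nat t * q"
  proof -
    have "M d q p v = M d q p (fc d p) + (\<Sum>c\<in>{fc d p..<v}. q ^ td d c p)"
      using M_split[of "fc d p" v d q p] vfc fc_gt[OF d1, of p] p2 by simp
    also have "(\<Sum>c\<in>{fc d p..<v}. q ^ td d c p) = (\<Sum>c\<in>{fc d p..<v}. q)"
    proof (rule sum.cong)
      fix c assume c: "c \<in> {fc d p..<v}"
      then have "c \<in> {fc d p..<fc d p + d}" using vfc tl by simp
      then have pc: "par d c = p" using par_fc[OF d1 p2] by blast
      have "p < c" using c fc_gt[OF d1, of p] by simp
      then have "td d c p = 1" using pc p2 by (simp add: td_gt)
      then show "q ^ td d c p = q" by simp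
    qed simp
    finally show ?thesis using vfc by simp
  qed
  have C: "M d q p (fc d p) = 1 + q + of_nat d * q * inc d q p"
    using L_main[OF d, of p p q] p2 par_lt[OF p2] inc_M[of d q p] by simp
  show ?thesis unfolding p_def[symmetric] t_def[symmetric]
    using A B C by (simp add: algebra_simps power2_eq_square)
qed



definition SS :: "nat \<Rightarrow> nat \<Rightarrow> nat" where
  "SS d k = (\<Sum>j<k. d ^ j)"

lemma SS_Suc1: "SS d (Suc k) = SS d k + d ^ k" unfolding SS_def by simp

lemma SS_Suc2: "SS d (Suc k) = d * SS d k + 1"
proof (induction k)
  case 0 then show ?case by (simp add: SS_def)
next
  case (Suc k)
  have "SS d (Suc (Suc k)) = SS d (Suc k) + d * d^k" by (simp add: SS_Suc1)
  also have "\<dots> = d * SS d k + 1 + d * d^k" using Suc.IH by simp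
  also have "\<dots> = d * (SS d k + d^k) + 1" by (simp add: algebra_simps)
  also have "\<dots> = d * SS d (Suc k) + 1" by (simp add: SS_Suc1)
  finally show ?case .
qed

lemma geo: "1 \<le> d \<Longrightarrow> (d - 1) * SS d k = d ^ k - 1"
proof (induction k)
  case 0 then show ?case by (simp add: SS_def)
next
  case (Suc k)
  have "1 \<le> d ^ k" using Suc.prems by simp
  have "(d - 1) * SS d (Suc k) = (d - 1) * SS d k + (d - 1) * d ^ k" by (simp add: SS_Suc1 algebra_simps)
  also have "\<dots> = d ^ k - 1 + (d - 1) * d ^ k" using Suc by simp
  also have "\<dots> = d ^ Suc k - 1" using \<open>1 \<le> d ^ k\<close> Suc.prems
    by (simp add: diff_mult_distrib algebra_simps)
  finally show ?case .
qed

lemma S_div: "2 \<le> d \<Longrightarrow> (d ^ k - 1) div (d - 1) = SS d k"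
proof -
  assume d: "2 \<le> d"
  then have "(d - 1) * SS d k = d ^ k - 1" using geo[of d k] by simp
  moreover have "0 < d - 1" using d by simp
  ultimately show ?thesis by (metis nonzero_mult_div_cancel_left less_not_refl2)
qed

lemma nk_S: "2 \<le> d \<Longrightarrow> nk d k = 2 + (d + 1) * SS d k"
  unfolding nk_def using S_div by simp

lemma mk_S: "2 \<le> d \<Longrightarrow> mk d k = 3 + 2 * d * SS d k"
  unfolding mk_def using S_div by simp

lemma key_le: "t < (d::nat) \<Longrightarrow> (d * b \<le> d * a + t) = (b \<le> a)"
proof
  assume t: "t < d" and h: "d * b \<le> d * a + t"
  show "b \<le> a"
  proof (rule ccontr)
    assume "\<not> b \<le> a"
    then have "Suc a \<le> b" by simp
    then have "d * Suc a \<le> d * b" by (rule mult_le_mono2)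
    then show False using h t by simp
  qed
next
  assume "b \<le> a"
  then have "d * b \<le> d * a" by (rule mult_le_mono2)
  then show "d * b \<le> d * a + t" by linarith
qed

lemma F_all:
  assumes d: "2 \<le> d" and v: "d + 3 \<le> v"
  shows "(nk d (Suc j) \<le> v) = (nk d j \<le> par d v)"
    and "(mk d (Suc j) \<le> v) = (mk d j \<le> par d v)"
    and "mk d (Suc j) \<le> v \<Longrightarrow> (v - mk d (Suc j)) div d ^ Suc j = (par d v - mk d j) div d ^ j"
proof -
  define a where "a = (v - 3) div d"
  define t where "t = (v - 3) mod d"
  define S where "S = SS d j"
  have tl: "t < d" unfolding t_def using d by simp
  have vv: "v = 3 + d * a + t" unfolding a_def t_def using mult_div_mod_eq[of d "v - 3"] v by simp
  have pv: "par d v = a + 1" unfolding par_def a_def by simp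
  have n1: "nk d (Suc j) = 3 + d * (1 + (d+1) * S)" unfolding nk_S[OF d] S_def SS_Suc2
    by (simp add: algebra_simps)
  have n0: "nk d j = 2 + (d+1) * S" unfolding nk_S[OF d] S_def ..
  have m1: "mk d (Suc j) = 3 + d * (2 + 2 * d * S)" unfolding mk_S[OF d] S_def SS_Suc2
    by (simp add: algebra_simps)
  have m0: "mk d j = 3 + 2 * d * S" unfolding mk_S[OF d] S_def ..
  show "(nk d (Suc j) \<le> v) = (nk d j \<le> par d v)"
    unfolding n1 n0 pv using key_le[OF tl, of "1 + (d+1) * S" a] vv by linarith
  show "(mk d (Suc j) \<le> v) = (mk d j \<le> par d v)"
    unfolding m1 m0 pv using key_le[OF tl, of "2 + 2 * d * S" a] vv by linarith
  assume h: "mk d (Suc j) \<le> v"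
  then have le: "2 + 2 * d * S \<le> a" unfolding m1 using key_le[OF tl, of "2 + 2 * d * S" a] vv by linarith
  have le2: "d * (2 + 2*d*S) \<le> d * a" using le by (rule mult_le_mono2)
  have "v - mk d (Suc j) = (d * a - d * (2 + 2*d*S)) + t"
    unfolding m1 vv using le2 by linarith
  also have "d * a - d * (2 + 2*d*S) = d * (a - (2 + 2 * d * S))" by (simp add: diff_mult_distrib2)
  finally have "v - mk d (Suc j) = d * (a - (2 + 2 * d * S)) + t" .
  moreover have "par d v - mk d j = a - (2 + 2 * d * S)" unfolding pv m0 by simp
  moreover have "(d * X + t) div d ^ Suc j = X div d ^ j" for X
  proof -
    have "(d * X + t) div d = X" using tl by simp
    then show ?thesis by (simp add: div_mult2_eq)
  qed
  ultimately show "(v - mk d (Suc j)) div d ^ Suc j = (par d v - mk d j) div d ^ j" by simp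
qed



definition term_o :: "nat \<Rightarrow> 'a::comm_ring_1 \<Rightarrow> nat \<Rightarrow> nat \<Rightarrow> 'a" where
  "term_o d q i v = (if nk d i \<le> v then of_nat (d^i) * q^(2*i+1) else 0)"

definition term_e :: "nat \<Rightarrow> 'a::comm_ring_1 \<Rightarrow> nat \<Rightarrow> nat \<Rightarrow> 'a" where
  "term_e d q i v = (if mk d i \<le> v then of_nat (d^i * (((v - mk d i) div d^i) mod d + 1)) * q^(2*i+2) else 0)"

definition Cf :: "nat \<Rightarrow> 'a::comm_ring_1 \<Rightarrow> nat \<Rightarrow> nat \<Rightarrow> 'a" where
  "Cf d q N v = (\<Sum>i<N. term_o d q i v + term_e d q i v)"

lemma nk0: "2 \<le> d \<Longrightarrow> nk d 0 = 2" by (simp add: nk_S SS_def)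
lemma mk0: "2 \<le> d \<Longrightarrow> mk d 0 = 3" by (simp add: mk_S SS_def)
lemma nk_Suc_ge: "2 \<le> d \<Longrightarrow> d + 3 \<le> nk d (Suc i)"
  by (simp add: nk_S SS_Suc2)
lemma mk_Suc_ge: "2 \<le> d \<Longrightarrow> d + 3 \<le> mk d (Suc i)"
  by (simp add: mk_S SS_Suc2)

lemma term_o_shift:
  assumes d: "2 \<le> d" and v: "d + 3 \<le> v"
  shows "term_o d q (Suc i) v = of_nat d * q^2 * term_o d q i (par d v)"
  unfolding term_o_def using F_all(1)[OF d v, of i]
  by (simp add: power_add power_mult power2_eq_square algebra_simps)

lemma term_e_shift:
  assumes d: "2 \<le> d" and v: "d + 3 \<le> v"
  shows "term_e d q (Suc i) v = of_nat d * q^2 * term_e d q i (par d v)"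
proof (cases "mk d (Suc i) \<le> v")
  case True
  then have "mk d i \<le> par d v" using F_all(2)[OF d v, of i] by simp
  then show ?thesis unfolding term_e_def using True F_all(3)[OF d v True]
    by (simp add: power_add power_mult power2_eq_square algebra_simps)
next
  case False
  then have "\<not> mk d i \<le> par d v" using F_all(2)[OF d v, of i] by simp
  then show ?thesis unfolding term_e_def using False by simp
qed

lemma Cf_zero_tail:
  assumes d: "2 \<le> d" and v: "v \<le> d + 2"
  shows "term_o d q (Suc i) v = 0" "term_e d q (Suc i) v = 0"
  unfolding term_o_def term_e_def using nk_Suc_ge[OF d, of i] mk_Suc_ge[OF d, of i] v by auto

lemma inc_Cf:
  fixes q :: "'a::comm_ring_1"
  assumes d: "2 \<le> d"
  shows "1 \<le> v \<Longrightarrow> v < nk d N \<Longrightarrow> inc d q v = Cf d q N v"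
proof (induction v arbitrary: N rule: less_induct)
  case (less v)
  have d1: "1 \<le> d" using d by simp
  show ?case
  proof (cases "v = 1")
    case True
    have "term_o d q i 1 = 0" "term_e d q i 1 = 0" for i
      unfolding term_o_def term_e_def using nk_S[OF d, of i] mk_S[OF d, of i] by auto
    then show ?thesis unfolding Cf_def inc_def using True by simp
  next
    case False
    then have v2: "2 \<le> v" using less.prems by simp
    have "N \<noteq> 0"
    proof
      assume "N = 0" then show False using less.prems(2) v2 nk0[OF d] by simp
    qed
    then obtain N' where N: "N = Suc N'" by (cases N) auto
    show ?thesis
    proof (cases "v \<le> d + 2")
      case True
      have t0: "term_o d q 0 v + term_e d q 0 v = q + of_nat (v - 2) * q^2"
      proof (cases "v = 2")
        case True
        then show ?thesis unfolding term_o_def term_e_def using nk0[OF d] mk0[OF d] by simp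
      next
        case False
        then have "3 \<le> v" using v2 by simp
        moreover have "v - 3 < d" using True d by linarith
        then have "(v - 3) mod d = v - 3" by simp
        ultimately show ?thesis unfolding term_o_def term_e_def using nk0[OF d] mk0[OF d]
          by (simp add: numeral_3_eq_3 numeral_2_eq_2)
      qed
      have "Cf d q N v = term_o d q 0 v + term_e d q 0 v"
        unfolding Cf_def N sum.lessThan_Suc_shift using Cf_zero_tail[OF d True, where q=q] by simp
      then show ?thesis using t0 inc_base[OF d v2 True] by simp
    next
      case False
      then have v3: "d + 3 \<le> v" by simp
      define p where "p = par d v"
      have p1: "1 \<le> p" unfolding p_def by (rule par_ge1)
      have pv: "p < v" unfolding p_def using par_lt[OF v2] .
      have "N' \<noteq> 0"
      proof
        assume "N' = 0"
        then have "v < nk d (Suc 0)" using less.prems(2) N by simp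
        moreover have "nk d (Suc 0) = d + 3" using d by (simp add: nk_S SS_def)
        ultimately show False using v3 by linarith
      qed
      have pN: "p < nk d N'"
      proof -
        have "\<not> nk d (Suc N') \<le> v" using less.prems(2) N by simp
        then show ?thesis using F_all(1)[OF d v3, of N'] p_def by simp
      qed
      have IH: "inc d q p = Cf d q N' p" using less.IH[OF pv p1 pN] .
      have t0: "term_o d q 0 v + term_e d q 0 v = q + of_nat ((v - 3) mod d + 1) * q^2"
        unfolding term_o_def term_e_def using nk0[OF d] mk0[OF d] v3 by (simp add: power2_eq_square)
      have "Cf d q N v = term_o d q 0 v + term_e d q 0 v + (\<Sum>i<N'. term_o d q (Suc i) v + term_e d q (Suc i) v)"
        unfolding Cf_def N sum.lessThan_Suc_shift by simp
      also have "(\<Sum>i<N'. term_o d q (Suc i) v + term_e d q (Suc i) v)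
          = of_nat d * q^2 * Cf d q N' p"
        unfolding Cf_def sum_distrib_left p_def
        by (rule sum.cong) (simp_all add: term_o_shift[OF d v3] term_e_shift[OF d v3] algebra_simps)
      finally show ?thesis using t0 inc_rec[OF d v3, of q] IH p_def by simp
    qed
  qed
qed



lemma sum_split_shift:
  fixes f :: "nat \<Rightarrow> nat"
  shows "(\<Sum>x<a + b. f x) = (\<Sum>x<a. f x) + (\<Sum>x<b. f (x + a))"
proof -
  have "(\<Sum>x<a + b. f x) = (\<Sum>x\<in>{0..<a}. f x) + (\<Sum>x\<in>{a..<a+b}. f x)"
    by (simp add: atLeast0LessThan[symmetric] sum.atLeastLessThan_concat)
  also have "(\<Sum>x\<in>{a..<a+b}. f x) = (\<Sum>x\<in>{0..<b}. f (x + a))"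
    using sum.shift_bounds_nat_ivl[of f 0 a b] by (simp add: add.commute)
  finally show ?thesis by (simp add: atLeast0LessThan)
qed

lemma blk_P3:
  assumes e: "1 \<le> e" and l: "l \<le> d"
  shows "(\<Sum>x<l*e. (x div e) mod d + 1) = e * ((l+1) choose 2)"
  using l
proof (induction l)
  case 0 then show ?case by simp
next
  case (Suc l)
  have ld: "l < d" using Suc.prems by simp
  have "(\<Sum>x<Suc l * e. (x div e) mod d + 1) = (\<Sum>x<l*e + e. (x div e) mod d + 1)"
    by (simp add: add.commute)
  also have "\<dots> = (\<Sum>x<l*e. (x div e) mod d + 1) + (\<Sum>x<e. ((x + l*e) div e) mod d + 1)"
    by (rule sum_split_shift)
  also have "(\<Sum>x<e. ((x + l*e) div e) mod d + 1) = (\<Sum>x<e. l + 1)"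
  proof (rule sum.cong)
    fix x assume "x \<in> {..<e}"
    then have "(x + l*e) div e = l" using e by simp
    then show "((x + l*e) div e) mod d + 1 = l + 1" using ld by simp
  qed simp
  finally show ?case using Suc by (simp add: numeral_2_eq_2 algebra_simps)
qed

lemma blk_P4:
  assumes e: "1 \<le> e" and d: "1 \<le> d"
  shows "(\<Sum>x<a*(d*e) + r. (x div e) mod d + 1) = a * (e * ((d+1) choose 2)) + (\<Sum>x<r. (x div e) mod d + 1)"
proof (induction a)
  case 0 then show ?case by simp
next
  case (Suc a)
  have "(\<Sum>x<Suc a*(d*e) + r. (x div e) mod d + 1) = (\<Sum>x<d*e + (a*(d*e) + r). (x div e) mod d + 1)"
    by (simp add: algebra_simps)
  also have "\<dots> = (\<Sum>x<d*e. (x div e) mod d + 1) + (\<Sum>x<a*(d*e) + r. ((x + d*e) div e) mod d + 1)"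
    by (rule sum_split_shift)
  also have "(\<Sum>x<a*(d*e) + r. ((x + d*e) div e) mod d + 1) = (\<Sum>x<a*(d*e) + r. (x div e) mod d + 1)"
  proof (rule sum.cong)
    fix x
    have "(x + d*e) div e = x div e + d" using e by simp
    then show "((x + d*e) div e) mod d + 1 = (x div e) mod d + 1" by simp
  qed simp
  also have "(\<Sum>x<d*e. (x div e) mod d + 1) = e * ((d+1) choose 2)"
    using blk_P3[OF e, of d d] by (simp add: mult.commute)
  finally show ?case using Suc by simp
qed

lemma blk_P5:
  assumes e: "1 \<le> e" and l: "l < d" and s: "s \<le> e"
  shows "(\<Sum>x<l*e + s. (x div e) mod d + 1) = e * ((l+1) choose 2) + s * (l+1)"
proof -
  have "(\<Sum>x<l*e + s. (x div e) mod d + 1) = (\<Sum>x<l*e. (x div e) mod d + 1) + (\<Sum>x<s. ((x + l*e) div e) mod d + 1)"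
    by (rule sum_split_shift)
  also have "(\<Sum>x<s. ((x + l*e) div e) mod d + 1) = (\<Sum>x<s. l + 1)"
  proof (rule sum.cong)
    fix x assume "x \<in> {..<s}"
    then have "x < e" using s by simp
    then have "(x + l*e) div e = l" using e by simp
    then show "((x + l*e) div e) mod d + 1 = l + 1" using l by simp
  qed simp
  finally show ?thesis using blk_P3[OF e, of l d] l by simp
qed

lemma block:
  assumes e: "1 \<le> e" and d: "1 \<le> d"
  shows "(\<Sum>x\<in>{0..X}. (x div e) mod d + 1) =
    e * (X div (d*e)) * ((d+1) choose 2) + e * (((X div e) mod d + 1) choose 2)
    + ((X div e) mod d + 1) * (X mod e + 1)"
proof -
  define a where "a = X div (d*e)"
  define l where "l = (X div e) mod d"
  define s where "s = X mod e"
  have XX: "X = a*(d*e) + (l*e + s)"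
  proof -
    have "X = e * (X div e) + s" unfolding s_def by simp
    moreover have "X div e = d * ((X div e) div d) + l" unfolding l_def by simp
    moreover have "(X div e) div d = a" unfolding a_def by (metis div_mult2_eq mult.commute)
    ultimately show ?thesis by (simp add: algebra_simps)
  qed
  have ld: "l < d" unfolding l_def using d by simp
  have se: "Suc s \<le> e" unfolding s_def using e by (simp add: Suc_leI)
  have "(\<Sum>x\<in>{0..X}. (x div e) mod d + 1) = (\<Sum>x<a*(d*e) + (l*e + Suc s). (x div e) mod d + 1)"
  proof -
    have "{0..X} = {..<a*(d*e) + (l*e + Suc s)}" using XX by auto
    then show ?thesis by simp
  qed
  also have "\<dots> = a * (e * ((d+1) choose 2)) + (e * ((l+1) choose 2) + Suc s * (l+1))"
    using blk_P4[OF e d, of a "l*e + Suc s"] blk_P5[OF e ld se] by simp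
  finally show ?thesis unfolding a_def[symmetric] l_def[symmetric] s_def[symmetric]
    by (simp add: algebra_simps)
qed



lemma low_digits: "(\<Sum>j<i. ((L div d^j) mod d) * d^j) = L mod (d::nat)^i"
proof (induction i)
  case 0 then show ?case by simp
next
  case (Suc i)
  have "L mod d^Suc i = d^i * (L div d^i mod d) + L mod d^i"
    using mod_mult2_eq[of L "d^i" d] by (simp add: mult.commute)
  then show ?case using Suc by (simp add: mult.commute)
qed

lemma digit_from_mod: "1 \<le> d \<Longrightarrow> (Y div d^i) mod d = (Y mod (d::nat)^(Suc i)) div d^i"
proof -
  assume d: "1 \<le> d"
  have "Y mod d^Suc i = d^i * (Y div d^i mod d) + Y mod d^i"
    using mod_mult2_eq[of Y "d^i" d] by (simp add: mult.commute)
  moreover have "Y mod d^i < d^i" using d by simp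
  ultimately show ?thesis using d by simp
qed

lemma low_from_mod: "Y mod (d::nat)^i = (Y mod d^(Suc i)) mod d^i"
  by (simp add: mod_mod_cancel)

lemma nk_mono: "2 \<le> d \<Longrightarrow> i \<le> k \<Longrightarrow> nk d i \<le> nk d k"
proof -
  assume d: "2 \<le> d" and ik: "i \<le> k"
  have "SS d i \<le> SS d k" unfolding SS_def by (rule sum_mono2) (use ik in auto)
  then have "(d+1) * SS d i \<le> (d+1) * SS d k" by (rule mult_le_mono2)
  then show ?thesis unfolding nk_S[OF d] by linarith
qed

lemma mk_lt_nk: "2 \<le> d \<Longrightarrow> mk d i < nk d (Suc i)"
proof -
  assume d: "2 \<le> d"
  have "1 * (d * SS d i) \<le> d * (d * SS d i)" using d by (intro mult_le_mono1) simp
  then have A: "d * SS d i \<le> d * (d * SS d i)" by simp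
  show ?thesis using d apply (simp add: mk_S nk_S SS_Suc2 algebra_simps) using A d by linarith
qed

lemma label_cong:
  assumes d: "2 \<le> d" and ik: "i \<le> k"
  shows "int (d^Suc i) dvd (int (mk d i) - int (nk d k) + int ((d-1) * d^k))"
  using ik
proof (induction k rule: dec_induct)
  case base
  have g: "(d - 1) * SS d i = d ^ i - 1" using geo[of d i] d by simp
  have "int (mk d i) - int (nk d i) + int ((d-1) * d^i) = int (d^Suc i)"
  proof -
    have "1 \<le> d^i" using d by simp
    then have "int ((d - 1) * SS d i) = int (d^i) - 1" using g by (simp add: of_nat_diff)
    then have "(int d - 1) * int (SS d i) = int (d^i) - 1" using d by (simp add: of_nat_diff)
    then show ?thesis using d by (simp add: mk_S nk_S of_nat_diff algebra_simps)
  qed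
  then show ?case by simp
next
  case (step k)
  have eq: "int (mk d i) - int (nk d (Suc k)) + int ((d-1) * d^Suc k)
      = (int (mk d i) - int (nk d k) + int ((d-1) * d^k)) + int (d^Suc k) * (int d - 3)"
    using d by (simp add: nk_S SS_Suc1 of_nat_diff algebra_simps)
  have "int d ^ Suc i dvd int d ^ Suc k" by (rule le_imp_power_dvd) (use step(1) in simp)
  then have "int (d^Suc i) dvd int (d^Suc k)" by simp
  then show ?case unfolding eq using step(3) by simp
qed

lemma label_mod:
  assumes d: "2 \<le> d" and ik: "i \<le> k" and nk: "nk d k \<le> n" and mk: "mk d i \<le> n"
  shows "(n - nk d k + (d - 1) * d ^ k) mod d^Suc i = (n - mk d i) mod d^Suc i"
proof -
  have e1: "int (n - nk d k) = int n - int (nk d k)" using nk by (simp add: of_nat_diff)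
  have e2: "int (n - mk d i) = int n - int (mk d i)" using mk by (simp add: of_nat_diff)
  have "int (n - nk d k + (d - 1) * d ^ k) - int (n - mk d i) = int (mk d i) - int (nk d k) + int ((d-1) * d^k)"
    unfolding of_nat_add e1 e2 by simp
  then have "int (d^Suc i) dvd (int (n - nk d k + (d - 1) * d ^ k) - int (n - mk d i))"
    by (simp only:) (rule label_cong[OF d ik])
  then have "int (n - nk d k + (d - 1) * d ^ k) mod int (d^Suc i) = int (n - mk d i) mod int (d^Suc i)"
    by (simp add: mod_eq_dvd_iff)
  then have "int ((n - nk d k + (d - 1) * d ^ k) mod d^Suc i) = int ((n - mk d i) mod d^Suc i)"
    by (simp only: of_nat_mod)
  then show ?thesis by (simp only: of_nat_eq_iff)
qed

lemma label_digit_eq: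
  assumes d: "2 \<le> d" and ik: "i \<le> k" and nk: "nk d k \<le> n" and mk: "mk d i \<le> n"
  shows "label_digit d k n i = ((n - mk d i) div d^i) mod d"
    and "label_low d k n i = (n - mk d i) mod d^i"
proof -
  have d1: "1 \<le> d" using d by simp
  note lm = label_mod[OF assms]
  show "label_digit d k n i = ((n - mk d i) div d^i) mod d"
    unfolding label_digit_def using digit_from_mod[OF d1] lm by metis
  show "label_low d k n i = (n - mk d i) mod d^i"
    unfolding label_low_def label_digit_def low_digits using low_from_mod lm by metis
qed



lemma swap_tri: fixes n :: nat shows "(\<Sum>u\<in>{1..n}. \<Sum>v\<in>{u<..n}. f u v) = (\<Sum>v\<in>{1..n}. \<Sum>u\<in>{1..<v}. (f u v :: 'a::comm_ring_1))"
proof (induction n)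
  case 0 then show ?case by simp
next
  case (Suc n)
  have A: "(\<Sum>u\<in>{1..Suc n}. \<Sum>v\<in>{u<..Suc n}. f u v) = (\<Sum>u\<in>{1..n}. \<Sum>v\<in>{u<..Suc n}. f u v)"
  proof -
    have "{1..Suc n} = insert (Suc n) {1..n}" by auto
    then show ?thesis by simp
  qed
  have B: "(\<Sum>u\<in>{1..n}. \<Sum>v\<in>{u<..Suc n}. f u v) = (\<Sum>u\<in>{1..n}. (\<Sum>v\<in>{u<..n}. f u v) + f u (Suc n))"
  proof (rule sum.cong)
    fix u assume "u \<in> {1..n}"
    then have "{u<..Suc n} = insert (Suc n) {u<..n}" by auto
    then show "(\<Sum>v\<in>{u<..Suc n}. f u v) = (\<Sum>v\<in>{u<..n}. f u v) + f u (Suc n)" by simp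
  qed simp
  have C: "(\<Sum>v\<in>{1..Suc n}. \<Sum>u\<in>{1..<v}. f u v) = (\<Sum>v\<in>{1..n}. \<Sum>u\<in>{1..<v}. f u v) + (\<Sum>u\<in>{1..n}. f u (Suc n))"
  proof -
    have "{1..<Suc n} = {1..n}" by auto
    then show ?thesis by simp
  qed
  show ?case using A B C Suc by (simp add: sum.distrib)
qed

lemma odd_sum:
  fixes q :: "'a::comm_ring_1"
  assumes d: "2 \<le> d" and ik: "i \<le> k" and nk: "nk d k \<le> n"
  shows "(\<Sum>v\<in>{1..n}. term_o d q i v) = of_nat (d ^ i * (n - nk d i + 1)) * q ^ (2 * i + 1)"
proof -
  have ni: "nk d i \<le> n" using nk_mono[OF d ik] nk by simp
  have n2: "2 \<le> nk d i" using nk_S[OF d, of i] by simp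
  have "(\<Sum>v\<in>{1..n}. term_o d q i v) = (\<Sum>v\<in>{v\<in>{1..n}. nk d i \<le> v}. of_nat (d^i) * q^(2*i+1))"
    unfolding term_o_def by (subst sum.inter_filter) auto
  also have "{v\<in>{1..n}. nk d i \<le> v} = {nk d i..n}" using n2 by auto
  also have "(\<Sum>v\<in>{nk d i..n}. of_nat (d^i) * q^(2*i+1)) = of_nat (n + 1 - nk d i) * (of_nat (d^i) * q^(2*i+1))"
    by simp
  finally have "(\<Sum>v\<in>{1..n}. term_o d q i v) = of_nat (n + 1 - nk d i) * (of_nat (d^i) * q^(2*i+1))" .
  moreover have "n + 1 - nk d i = n - nk d i + 1" using ni by simp
  ultimately show ?thesis by (simp only: of_nat_mult ac_simps)
qed

lemma even_zero:
  assumes "n < mk d i"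
  shows "(\<Sum>v\<in>{1..n}. term_e d q i v) = 0"
  unfolding term_e_def using assms by (intro sum.neutral) auto

lemma even_sum:
  fixes q :: "'a::comm_ring_1"
  assumes d: "2 \<le> d" and mk: "mk d i \<le> n"
  shows "(\<Sum>v\<in>{1..n}. term_e d q i v)
     = of_nat (d^i * (\<Sum>x\<in>{0..n - mk d i}. (x div d^i) mod d + 1)) * q^(2*i+2)"
proof -
  have m3: "1 \<le> mk d i" using mk_S[OF d, of i] by simp
  have "(\<Sum>v\<in>{1..n}. term_e d q i v)
     = (\<Sum>v\<in>{v\<in>{1..n}. mk d i \<le> v}. of_nat (d^i * (((v - mk d i) div d^i) mod d + 1)) * q^(2*i+2))"
    unfolding term_e_def by (subst sum.inter_filter) auto
  also have "{v\<in>{1..n}. mk d i \<le> v} = {mk d i..n}" using m3 by auto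
  also have "(\<Sum>v\<in>{mk d i..n}. of_nat (d^i * (((v - mk d i) div d^i) mod d + 1)) * q^(2*i+2))
     = of_nat (\<Sum>v\<in>{mk d i..n}. d^i * (((v - mk d i) div d^i) mod d + 1)) * q^(2*i+2)"
    by (simp add: sum_distrib_right)
  also have "(\<Sum>v\<in>{mk d i..n}. d^i * (((v - mk d i) div d^i) mod d + 1))
      = (\<Sum>x\<in>{0..n - mk d i}. d^i * ((x div d^i) mod d + 1))"
    using sum.shift_bounds_cl_nat_ivl[of "\<lambda>v. d^i * (((v - mk d i) div d^i) mod d + 1)" 0 "mk d i" "n - mk d i"] mk
    by simp
  finally show ?thesis by (simp add: sum_distrib_left)
qed

lemma even_term:
  fixes q :: "'a::comm_ring_1"
  assumes d: "2 \<le> d" and ik: "i \<le> k" and nk: "nk d k \<le> n" and mk: "mk d i \<le> n"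
  shows "(\<Sum>v\<in>{1..n}. term_e d q i v) =
       of_int ( int (d ^ (2 * i)) * ((int n - int (mk d i)) div int (d ^ (i + 1))) * int ((d + 1) choose 2)
              + int (d ^ (2 * i) * ((label_digit d k n i + 1) choose 2))
              + int (d ^ i * (label_digit d k n i + 1) * (label_low d k n i + 1)))
       * q ^ (2 * i + 2)"
proof -
  define X where "X = n - mk d i"
  define e where "e = d ^ i"
  have d1: "1 \<le> d" using d by simp
  have e1: "1 \<le> e" unfolding e_def using d by simp
  have ld: "label_digit d k n i = (X div e) mod d" "label_low d k n i = X mod e"
    using label_digit_eq[OF d ik nk mk] unfolding X_def e_def by auto
  have dv: "(int n - int (mk d i)) div int (d ^ (i + 1)) = int (X div (d * e))"
    unfolding X_def e_def using mk by (simp add: of_nat_diff zdiv_int mult.commute)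
  have d2: "d ^ (2 * i) = e * e" unfolding e_def by (simp add: mult_2 power_add)
  have "(\<Sum>v\<in>{1..n}. term_e d q i v) = of_nat (e * (\<Sum>x\<in>{0..X}. (x div e) mod d + 1)) * q^(2*i+2)"
    using even_sum[OF d mk, of q] unfolding X_def e_def .
  also have "(\<Sum>x\<in>{0..X}. (x div e) mod d + 1) = e * (X div (d*e)) * ((d+1) choose 2) + e * (((X div e) mod d + 1) choose 2)
    + ((X div e) mod d + 1) * (X mod e + 1)" by (rule block[OF e1 d1])
  finally show ?thesis unfolding ld dv d2 e_def[symmetric]
    by (simp add: algebra_simps)
qed



theorem theorem2p2:
  fixes d n k :: nat and q :: "'a::comm_ring_1"
  assumes "d \<ge> 2" and "n \<ge> 2" and "nk d k \<le> n" and "n < nk d (Suc k)"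
  shows "wiener n (dend_edges d n) q =
    (\<Sum>i\<le>k. of_nat (d ^ i * (n - nk d i + 1)) * q ^ (2 * i + 1))
  + (\<Sum>i<(if n < mk d k then k else Suc k).
       of_int ( int (d ^ (2 * i)) * ((int n - int (mk d i)) div int (d ^ (i + 1))) * int ((d + 1) choose 2)
              + int (d ^ (2 * i) * ((label_digit d k n i + 1) choose 2))
              + int (d ^ i * (label_digit d k n i + 1) * (label_low d k n i + 1)))
       * q ^ (2 * i + 2))"
proof -
  have d: "2 \<le> d" using assms(1) .
  have nkn: "nk d k \<le> n" using assms(3) .
  have W1: "wiener n (dend_edges d n) q = (\<Sum>u\<in>{1..n}. \<Sum>v\<in>{u<..n}. q ^ td d u v)"
    unfolding wiener_def dend_Ed[OF d]
  proof (rule sum.cong)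
    fix u assume u: "u \<in> {1..n}"
    show "(\<Sum>v\<in>{u<..n}. q ^ gdist (Ed d n) u v) = (\<Sum>v\<in>{u<..n}. q ^ td d u v)"
    proof (rule sum.cong)
      fix v assume "v \<in> {u<..n}"
      then show "q ^ gdist (Ed d n) u v = q ^ td d u v" using u by (simp add: gdist_td)
    qed simp
  qed simp
  also have "\<dots> = (\<Sum>v\<in>{1..n}. inc d q v)" unfolding swap_tri inc_def ..
  also have "\<dots> = (\<Sum>v\<in>{1..n}. Cf d q (Suc k) v)"
  proof (rule sum.cong)
    fix v assume "v \<in> {1..n}"
    then show "inc d q v = Cf d q (Suc k) v" using inc_Cf[OF d, of v "Suc k" q] assms(4) by simp
  qed simp
  also have "\<dots> = (\<Sum>i<Suc k. \<Sum>v\<in>{1..n}. term_o d q i v) + (\<Sum>i<Suc k. \<Sum>v\<in>{1..n}. term_e d q i v)"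
  proof -
    have "(\<Sum>v\<in>{1..n}. Cf d q (Suc k) v) = (\<Sum>v\<in>{1..n}. \<Sum>i<Suc k. term_o d q i v) + (\<Sum>v\<in>{1..n}. \<Sum>i<Suc k. term_e d q i v)"
      unfolding Cf_def sum.distrib ..
    also have "(\<Sum>v\<in>{1..n}. \<Sum>i<Suc k. term_o d q i v) = (\<Sum>i<Suc k. \<Sum>v\<in>{1..n}. term_o d q i v)"
      by (rule sum.swap)
    also have "(\<Sum>v\<in>{1..n}. \<Sum>i<Suc k. term_e d q i v) = (\<Sum>i<Suc k. \<Sum>v\<in>{1..n}. term_e d q i v)"
      by (rule sum.swap)
    finally show ?thesis .
  qed
  also have "(\<Sum>i<Suc k. \<Sum>v\<in>{1..n}. term_o d q i v) = (\<Sum>i\<le>k. of_nat (d ^ i * (n - nk d i + 1)) * q ^ (2 * i + 1))"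
    unfolding lessThan_Suc_atMost
  proof (rule sum.cong)
    fix i assume "i \<in> {..k}"
    then have "i \<le> k" by simp
    then show "(\<Sum>v\<in>{1..n}. term_o d q i v) = of_nat (d ^ i * (n - nk d i + 1)) * q ^ (2 * i + 1)"
      by (rule odd_sum[OF d _ nkn])
  qed simp
  also have "(\<Sum>i<Suc k. \<Sum>v\<in>{1..n}. term_e d q i v) = (\<Sum>i<(if n < mk d k then k else Suc k). \<Sum>v\<in>{1..n}. term_e d q i v)"
  proof (cases "n < mk d k")
    case True
    then show ?thesis using even_zero[OF True, of q] by simp
  next
    case False
    then show ?thesis by simp
  qed
  also have "\<dots> = (\<Sum>i<(if n < mk d k then k else Suc k).
       of_int ( int (d ^ (2 * i)) * ((int n - int (mk d i)) div int (d ^ (i + 1))) * int ((d + 1) choose 2)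
              + int (d ^ (2 * i) * ((label_digit d k n i + 1) choose 2))
              + int (d ^ i * (label_digit d k n i + 1) * (label_low d k n i + 1)))
       * q ^ (2 * i + 2))"
  proof (rule sum.cong)
    fix i assume i: "i \<in> {..<(if n < mk d k then k else Suc k)}"
    have ik: "i \<le> k" using i by (auto split: if_splits)
    have mi: "mk d i \<le> n"
    proof (cases "i < k")
      case True
      then have "nk d (Suc i) \<le> nk d k" using nk_mono[OF d, of "Suc i" k] by simp
      then show ?thesis using mk_lt_nk[OF d, of i] nkn by simp
    next
      case False
      then have "i = k" "\<not> n < mk d k" using i ik by (auto split: if_splits)
      then show ?thesis by simp
    qed
    show "(\<Sum>v\<in>{1..n}. term_e d q i v) = of_int ( int (d ^ (2 * i)) * ((int n - int (mk d i)) div int (d ^ (i + 1))) * int ((d + 1) choose 2)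
              + int (d ^ (2 * i) * ((label_digit d k n i + 1) choose 2))
              + int (d ^ i * (label_digit d k n i + 1) * (label_low d k n i + 1)))
       * q ^ (2 * i + 2)"
      by (rule even_term[OF d ik nkn mi])
  qed simp
  finally show ?thesis .
qed


end
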